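(* For each prime $p$, the function $n\mapsto\mathrm{ord}_p(\overline{F}_n)$ takes both positive and negative values. More precisely: (1) For every prime $p$, $\mathrm{ord}_p(\overline{F}_p)=p-1>0$. (2) $\mathrm{ord}_2(\overline{F}_7)=-1$. For every odd prime $p$, $\mathrm{ord}_p(\overline{F}_{3p-1})=-\frac{p-1}{2}$, and more generally $\mathrm{ord}_p(\overline{F}_n)<0$ for all integers $n$ with $\frac{8}{3}p\le n\le 3p-1$.
   Context: For a positive integer $n$, $\overline{F}_n=\Big(\prod_{1\le h\le k\le n,\ \gcd(h,k)=1}\frac{h}{k}\Big)^{-1}$ is the reciprocal of the product of all nonzero Farey fractions of order $n$. For a nonzero rational $x$, $\mathrm{ord}_p(x)$ is the exponent of the prime $p$ in $x$ (possibly negative). *)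

theory Defs
  imports "HOL-Computational_Algebra.Computational_Algebra"
begin

definition farey_bar :: "nat \<Rightarrow> rat" where
  "farey_bar n = inverse (\<Prod>(h, k) \<in> {(h, k). 1 \<le> h \<and> h \<le> k \<and> k \<le> n \<and> coprime h k}.
      (of_nat h / of_nat k :: rat))"

definition rat_ord :: "nat \<Rightarrow> rat \<Rightarrow> int" where
  "rat_ord p x = (case quotient_of x of (a, b) \<Rightarrow>
      int (multiplicity (int p) a) - int (multiplicity (int p) b))"

end

theory Submission
  imports Defs "HOL-Number_Theory.Number_Theory"
begin

lemma mult_int_nat:
  assumes "prime (p::nat)" "k > 0"
  shows "multiplicity (int p) (int k) = multiplicity p k"
proof -
  have pi: "prime (int p)" using assms by simp
  have d: "\<And>n. (int p)^n dvd int k \<longleftrightarrow> p^n dvd k"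
    by (simp only: of_nat_power[symmetric] of_nat_dvd_iff)
  have u: "\<not> is_unit (int p)" "\<not> is_unit p" "int k \<noteq> 0" "k \<noteq> 0" using assms
    by (auto dest: prime_gt_1_nat)
  have "\<And>n. n \<le> multiplicity (int p) (int k) \<longleftrightarrow> n \<le> multiplicity p k"
  proof -
    fix n
    have "n \<le> multiplicity (int p) (int k) \<longleftrightarrow> (int p)^n dvd int k"
      using power_dvd_iff_le_multiplicity[of "int k" "int p" n] u by blast
    also have "\<dots> \<longleftrightarrow> p^n dvd k" using d by blast
    also have "\<dots> \<longleftrightarrow> n \<le> multiplicity p k"
      using power_dvd_iff_le_multiplicity[of k p n] u by blast
    finally show "n \<le> multiplicity (int p) (int k) \<longleftrightarrow> n \<le> multiplicity p k" .
  qed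
  thus ?thesis by (meson order.antisym order.refl)
qed

lemma rat_ord_frac:
  assumes p: "prime (p::nat)" and a: "a \<noteq> 0" and b: "b \<noteq> 0"
  shows "rat_ord p (of_int a / of_int b) = int (multiplicity (int p) a) - int (multiplicity (int p) b)"
proof -
  obtain a' b' where q: "quotient_of (of_int a / of_int b) = (a', b')" by (cases "quotient_of (of_int a / of_int b)")
  have eq: "(of_int a / of_int b :: rat) = of_int a' / of_int b'" using quotient_of_div[OF q] .
  have b': "b' > 0" using quotient_of_denom_pos[OF q] .
  have a': "a' \<noteq> 0" using eq a b b' by auto
  have "(of_int (a * b') :: rat) = of_int (a' * b)" using eq b b' by (simp add: field_simps)
  hence e: "a * b' = a' * b" by (simp only: of_int_eq_iff)
  have pe: "prime_elem (int p)" using p by simp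
  have "multiplicity (int p) a + multiplicity (int p) b' = multiplicity (int p) a' + multiplicity (int p) b"
  proof -
    have "multiplicity (int p) (a*b') = multiplicity (int p) (a'*b)" using e by simp
    moreover have "b' \<noteq> 0" using b' by simp
    ultimately show ?thesis
      using prime_elem_multiplicity_mult_distrib[OF pe a, of b'] prime_elem_multiplicity_mult_distrib[OF pe a' b] by simp
  qed
  thus ?thesis unfolding rat_ord_def q by simp
qed

definition SS :: "nat \<Rightarrow> (nat \<times> nat) set" where
  "SS n = {(h, k). 1 \<le> h \<and> h \<le> k \<and> k \<le> n \<and> coprime h k}"

definition TT :: "nat \<Rightarrow> nat set" where
  "TT k = {h. 1 \<le> h \<and> h \<le> k \<and> coprime h k}"

definition VV :: "nat \<Rightarrow> nat \<Rightarrow> int" where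
  "VV p n = (\<Sum>(h,k)\<in>SS n. int (multiplicity p k) - int (multiplicity p h))"

definition DD :: "nat \<Rightarrow> nat \<Rightarrow> int" where
  "DD p k = (\<Sum>h\<in>TT k. int (multiplicity p k) - int (multiplicity p h))"

lemma finite_SS: "finite (SS n)"
  by (rule finite_subset[of _ "{1..n} \<times> {1..n}"]) (auto simp: SS_def)

lemma finite_TT: "finite (TT n)"
  by (rule finite_subset[of _ "{1..n}"]) (auto simp: TT_def)

lemma rat_ord_VV:
  assumes p: "prime p"
  shows "rat_ord p (farey_bar n) = VV p n"
proof -
  define A where "A = (\<Prod>(h,k)\<in>SS n. int h)"
  define B where "B = (\<Prod>(h,k)\<in>SS n. int k)"
  have fb: "farey_bar n = of_int B / of_int A"
  proof -
    have "(\<Prod>(h, k) \<in> SS n. (of_nat h / of_nat k :: rat)) = (\<Prod>x\<in>SS n. of_nat (fst x)) / (\<Prod>x\<in>SS n. of_nat (snd x))"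
      by (simp add: case_prod_beta prod_dividef)
    also have "\<dots> = of_int A / of_int B" by (simp add: A_def B_def case_prod_beta)
    finally show ?thesis unfolding farey_bar_def SS_def[symmetric] by simp
  qed
  have A0: "A \<noteq> 0" unfolding A_def prod_zero_iff[OF finite_SS] by (auto simp: SS_def)
  have B0: "B \<noteq> 0" unfolding B_def prod_zero_iff[OF finite_SS] by (auto simp: SS_def)
  have pe: "prime_elem (int p)" using p by simp
  have mA: "multiplicity (int p) A = (\<Sum>x\<in>SS n. multiplicity p (fst x))"
  proof -
    have "multiplicity (int p) A = (\<Sum>x\<in>SS n. multiplicity (int p) (int (fst x)))"
      unfolding A_def case_prod_beta
      by (rule prime_elem_multiplicity_prod_distrib[OF pe _ finite_SS]) (auto simp: SS_def)
    also have "\<dots> = (\<Sum>x\<in>SS n. multiplicity p (fst x))"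
      by (rule sum.cong) (auto simp: SS_def mult_int_nat[OF p])
    finally show ?thesis .
  qed
  have mB: "multiplicity (int p) B = (\<Sum>x\<in>SS n. multiplicity p (snd x))"
  proof -
    have "multiplicity (int p) B = (\<Sum>x\<in>SS n. multiplicity (int p) (int (snd x)))"
      unfolding B_def case_prod_beta
      by (rule prime_elem_multiplicity_prod_distrib[OF pe _ finite_SS]) (auto simp: SS_def)
    also have "\<dots> = (\<Sum>x\<in>SS n. multiplicity p (snd x))"
      by (rule sum.cong) (auto simp: SS_def mult_int_nat[OF p])
    finally show ?thesis .
  qed
  have "rat_ord p (farey_bar n) = int (\<Sum>x\<in>SS n. multiplicity p (snd x)) - int (\<Sum>x\<in>SS n. multiplicity p (fst x))"
    unfolding fb rat_ord_frac[OF p B0 A0] mA mB ..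
  also have "\<dots> = VV p n" unfolding VV_def case_prod_beta sum_subtractf of_nat_sum ..
  finally show ?thesis .
qed


lemma VV_0: "VV p 0 = 0"
proof -
  have "SS 0 = {}" by (auto simp: SS_def)
  thus ?thesis by (simp add: VV_def)
qed

lemma VV_Suc: "VV p (Suc n) = VV p n + DD p (Suc n)"
proof -
  have e: "SS (Suc n) = SS n \<union> (\<lambda>h. (h, Suc n)) ` TT (Suc n)"
    by (auto simp: SS_def TT_def le_Suc_eq)
  have d: "SS n \<inter> (\<lambda>h. (h, Suc n)) ` TT (Suc n) = {}" by (auto simp: SS_def)
  have inj: "inj_on (\<lambda>h. (h, Suc n)) (TT (Suc n))" by (auto simp: inj_on_def)
  have "VV p (Suc n) = VV p n + (\<Sum>x\<in>(\<lambda>h. (h, Suc n)) ` TT (Suc n). (case x of (h,k) \<Rightarrow> int (multiplicity p k) - int (multiplicity p h)))"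
    unfolding VV_def e by (rule sum.union_disjoint) (auto simp: finite_SS finite_TT d)
  also have "(\<Sum>x\<in>(\<lambda>h. (h, Suc n)) ` TT (Suc n). (case x of (h,k) \<Rightarrow> int (multiplicity p k) - int (multiplicity p h))) = DD p (Suc n)"
    unfolding DD_def by (subst sum.reindex[OF inj]) simp
  finally show ?thesis .
qed

lemma mult_small:
  assumes p: "prime (p::nat)" and h: "0 < h" "h < p^2"
  shows "multiplicity p h = (if p dvd h then 1 else 0)"
proof (cases "p dvd h")
  case True
  have u: "\<not> is_unit p" "h \<noteq> 0" using p h by (auto dest: prime_gt_1_nat)
  have "\<not> p^2 dvd h"
  proof
    assume "p^2 dvd h"
    hence "p^2 \<le> h" using h(1) by (rule dvd_imp_le)
    thus False using h(2) by simp
  qed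
  hence "multiplicity p h < 2" using multiplicity_lessI[of h p 2] u by blast
  moreover have "multiplicity p h > 0" using multiplicity_gt_zero_iff[of h p] u True by blast
  ultimately show ?thesis using True by simp
next
  case False
  thus ?thesis by (simp add: not_dvd_imp_multiplicity_0)
qed

lemma TT_totatives: "TT k = totatives k"
  by (auto simp: TT_def totatives_def)

lemma DD_dvd:
  assumes p: "prime (p::nat)" and d: "p dvd k"
  shows "DD p k = int (totient k) * int (multiplicity p k)"
proof -
  have "\<And>h. h \<in> TT k \<Longrightarrow> multiplicity p h = 0"
  proof -
    fix h assume "h \<in> TT k"
    hence c: "coprime h k" by (simp add: TT_def)
    have "\<not> p dvd h"
    proof
      assume "p dvd h"
      thus False using coprime_common_divisor[OF c _ d] p not_prime_unit by blast
    qed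
    thus "multiplicity p h = 0" by (simp add: not_dvd_imp_multiplicity_0)
  qed
  hence "DD p k = (\<Sum>h\<in>TT k. int (multiplicity p k))" unfolding DD_def by (intro sum.cong) auto
  also have "\<dots> = int (totient k) * int (multiplicity p k)"
    by (simp add: totient_def TT_totatives)
  finally show ?thesis .
qed

lemma DD_small:
  assumes p: "prime (p::nat)" and d: "\<not> p dvd k" and k: "k < p^2"
  shows "DD p k = - int (card {h\<in>TT k. p dvd h})"
proof -
  have "DD p k = - (\<Sum>h\<in>TT k. int (multiplicity p h))"
    unfolding DD_def using d by (simp add: not_dvd_imp_multiplicity_0 sum_negf)
  also have "(\<Sum>h\<in>TT k. int (multiplicity p h)) = (\<Sum>h\<in>TT k. if p dvd h then 1 else 0)"
  proof (rule sum.cong)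
    fix h assume "h \<in> TT k"
    hence "0 < h" "h < p^2" using k by (auto simp: TT_def)
    thus "int (multiplicity p h) = (if p dvd h then 1 else 0)" using mult_small[OF p] by simp
  qed simp
  also have "\<dots> = int (card {h\<in>TT k. p dvd h})"
    by (simp add: sum.If_cases finite_TT Int_def)
  finally show ?thesis by simp
qed


lemma DD_lt:
  assumes p: "prime (p::nat)" and k: "k < p"
  shows "DD p k = 0"
proof (cases "k = 0")
  case True
  have "TT 0 = {}" by (auto simp: TT_def)
  thus ?thesis using True by (simp add: DD_def)
next
  case False
  have nd: "\<not> p dvd k" using False k by (auto dest: dvd_imp_le)
  have "p*1 \<le> p*p" using prime_gt_0_nat[OF p] by (intro mult_le_mono2) simp
  hence "p \<le> p^2" by (simp add: power2_eq_square)
  hence k2: "k < p^2" using k by simp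
  have e: "{h\<in>TT k. p dvd h} = {}" using k by (auto simp: TT_def dest: dvd_imp_le)
  have "DD p k = - int (card {h\<in>TT k. p dvd h})" by (rule DD_small[OF p nd k2])
  also have "\<dots> = 0" unfolding e by simp
  finally show ?thesis .
qed

lemma DD_p:
  assumes p: "prime (p::nat)"
  shows "DD p p = int p - 1"
proof -
  have "multiplicity p p = 1" using multiplicity_prime_power[of p 1] p by simp
  moreover have "p \<ge> 1" using prime_gt_0_nat[OF p] by linarith
  ultimately show ?thesis using DD_dvd[OF p dvd_refl] totient_prime[OF p] by (simp add: of_nat_diff)
qed

lemma p_ge3: "prime (p::nat) \<Longrightarrow> odd p \<Longrightarrow> p \<ge> 3"
  using prime_ge_2_nat[of p] by (cases "p = 2") auto

lemma p_sq: "prime (p::nat) \<Longrightarrow> odd p \<Longrightarrow> 3 * p \<le> p^2"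
  using p_ge3[of p] by (simp add: power2_eq_square)

lemma DD_2p:
  assumes p: "prime (p::nat)" and o: "odd p"
  shows "DD p (2*p) = int p - 1"
proof -
  have p3: "p \<ge> 3" using p_ge3[OF p o] .
  have "\<not> p dvd 2" using p3 by (auto dest: dvd_imp_le)
  hence m2: "multiplicity p 2 = 0" by (simp add: not_dvd_imp_multiplicity_0)
  have "multiplicity p p = 1" using multiplicity_prime_power[of p 1] p by simp
  hence m: "multiplicity p (2*p) = 1"
    using prime_elem_multiplicity_mult_distrib[of p 2 p] p p3 m2 by simp
  have "coprime 2 p" using o by simp
  hence t: "totient (2*p) = p - 1" using totient_mult_coprime[of 2 p] totient_prime[OF p] by simp
  show ?thesis using DD_dvd[OF p, of "2*p"] m t p3 by (simp add: of_nat_diff)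
qed

lemma DD_mid:
  assumes p: "prime (p::nat)" and k: "p < k" "k < 2*p"
  shows "DD p k = -1"
proof -
  have nd: "\<not> p dvd k"
  proof
    assume "p dvd k"
    then obtain m where m: "k = p*m" by auto
    have "p*1 < p*m" "p*m < p*2" using k m by auto
    hence "1 < m" "m < 2" by simp_all
    thus False by simp
  qed
  have "k < p^2" using k by (simp add: power2_eq_square) (metis mult_le_mono1 prime_ge_2_nat[OF p] mult.commute order.strict_trans2)
  moreover have "{h\<in>TT k. p dvd h} = {p}"
  proof (intro equalityI subsetI)
    fix h assume "h \<in> {h\<in>TT k. p dvd h}"
    then obtain m where hm: "h = p*m" and h1: "1 \<le> h" "h \<le> k" by (auto simp: TT_def)
    have "p*m < p*2" using hm h1 k by linarith
    hence "m < 2" by simp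
    moreover have "m \<noteq> 0" using hm h1 by auto
    ultimately show "h \<in> {p}" using hm by simp
  next
    fix h assume "h \<in> {p}"
    thus "h \<in> {h\<in>TT k. p dvd h}" using k prime_imp_coprime[OF p nd] prime_gt_0_nat[OF p]
      by (auto simp: TT_def)
  qed
  ultimately show ?thesis using DD_small[OF p nd] by simp
qed

lemma DD_hi:
  assumes p: "prime (p::nat)" and o: "odd p" and k: "2*p < k" "k < 3*p"
  shows "DD p k = (if odd k then -2 else -1)"
proof -
  have nd: "\<not> p dvd k"
  proof
    assume "p dvd k"
    then obtain m where m: "k = p*m" by auto
    have "p*2 < p*m" "p*m < p*3" using k m by auto
    hence "2 < m" "m < 3" by simp_all
    thus False by simp
  qed
  have k2: "k < p^2" using k p_sq[OF p o] by simp
  have cp: "coprime p k" using prime_imp_coprime[OF p nd] .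
  have "{h\<in>TT k. p dvd h} = (if odd k then {p, 2*p} else {p})"
  proof (intro equalityI subsetI)
    fix h assume "h \<in> {h\<in>TT k. p dvd h}"
    then obtain m where hm: "h = p*m" and h1: "1 \<le> h" "h \<le> k" "coprime h k" by (auto simp: TT_def)
    have "p*m < p*3" using hm h1 k by linarith
    hence "m < 3" by simp
    moreover have "m \<noteq> 0" using hm h1 by auto
    moreover have "m = 2 \<Longrightarrow> odd k" using hm h1(3) by simp
    ultimately show "h \<in> (if odd k then {p, 2*p} else {p})" using hm
      by (cases "m = 1") (auto simp: mult.commute)
  next
    fix h assume "h \<in> (if odd k then {p, 2*p} else {p})"
    moreover have "p \<in> TT k" using k cp prime_gt_0_nat[OF p] by (auto simp: TT_def)
    moreover have "odd k \<Longrightarrow> 2*p \<in> TT k" using k cp prime_gt_0_nat[OF p] by (auto simp: TT_def)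
    ultimately show "h \<in> {h\<in>TT k. p dvd h}" by (auto split: if_splits)
  qed
  moreover have "p \<noteq> 2*p" using prime_gt_0_nat[OF p] by simp
  ultimately show ?thesis using DD_small[OF p nd k2] by simp
qed


lemma VV_lt:
  assumes p: "prime (p::nat)"
  shows "n < p \<Longrightarrow> VV p n = 0"
proof (induction n)
  case 0
  then show ?case by (simp add: VV_0)
next
  case (Suc n)
  then show ?case using DD_lt[OF p, of "Suc n"] by (simp add: VV_Suc)
qed

lemma VV_p:
  assumes p: "prime (p::nat)"
  shows "VV p p = int p - 1"
proof -
  have e: "p = Suc (p - 1)" using prime_gt_0_nat[OF p] by simp
  have "VV p p = VV p (p - 1) + DD p (Suc (p - 1))" by (subst e) (rule VV_Suc)
  also have "\<dots> = int p - 1" using VV_lt[OF p, of "p - 1"] DD_p[OF p] e by simp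
  finally show ?thesis .
qed

lemma VV_odd:
  assumes p: "prime (p::nat)" and o: "odd p"
  shows "n < 3*p \<Longrightarrow> VV p n = (if n < p then 0 else if n < 2*p then 2*int p - 1 - int n
           else 3*int p - 1 - int n - (int n - 2*int p + 1) div 2)"
proof (induction n)
  case 0
  then show ?case using prime_gt_0_nat[OF p] by (simp add: VV_0)
next
  case (Suc n)
  have IH: "VV p n = (if n < p then 0 else if n < 2*p then 2*int p - 1 - int n
           else 3*int p - 1 - int n - (int n - 2*int p + 1) div 2)" using Suc by simp
  have D: "DD p (Suc n) = (if Suc n < p then 0 else if Suc n = p then int p - 1 else if Suc n < 2*p then -1
     else if Suc n = 2*p then int p - 1 else if odd (Suc n) then -2 else -1)"
  proof -
    consider "Suc n < p" | "Suc n = p" | "p < Suc n \<and> Suc n < 2*p" | "Suc n = 2*p" | "2*p < Suc n" by linarith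
    then show ?thesis
    proof cases
      case 1 then show ?thesis using DD_lt[OF p] by simp
    next
      case 2 then show ?thesis using DD_p[OF p] by simp
    next
      case 3 then show ?thesis using DD_mid[OF p, of "Suc n"] by simp
    next
      case 4 then show ?thesis using DD_2p[OF p o] by simp
    next
      case 5 then show ?thesis using DD_hi[OF p o, of "Suc n"] Suc.prems by simp
    qed
  qed
  have "odd (Suc n) \<longleftrightarrow> even n" by simp
  show ?case unfolding VV_Suc IH D
    by (simp add: even_iff_mod_2_eq_zero) presburger
qed


lemma TT_filter: "TT k = set (filter (\<lambda>h. coprime h k) [1..<Suc k])"
  by (auto simp: TT_def)

lemma TT3: "TT 3 = {1,2}" unfolding TT_filter by code_simp
lemma TT4: "TT 4 = {1,3}" unfolding TT_filter by code_simp
lemma TT5: "TT 5 = {1,2,3,4}" unfolding TT_filter by code_simp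
lemma TT6: "TT 6 = {1,5}" unfolding TT_filter by code_simp
lemma TT7: "TT 7 = {1,2,3,4,5,6}" unfolding TT_filter by code_simp

lemma m2_1: "multiplicity (2::nat) 1 = 0" by simp
lemma m2_2: "multiplicity (2::nat) 2 = 1" using multiplicity_prime_power[of "2::nat" 1] by simp
lemma m2_3: "multiplicity (2::nat) 3 = 0" by (rule not_dvd_imp_multiplicity_0) simp
lemma m2_4: "multiplicity (2::nat) 4 = 2" using multiplicity_prime_power[of "2::nat" 2] by simp
lemma m2_5: "multiplicity (2::nat) 5 = 0" by (rule not_dvd_imp_multiplicity_0) simp
lemma m2_6: "multiplicity (2::nat) 6 = 1"
  using prime_elem_multiplicity_mult_distrib[of "2::nat" 2 3] m2_2 m2_3 by simp
lemma m2_7: "multiplicity (2::nat) 7 = 0" by (rule not_dvd_imp_multiplicity_0) simp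

lemma VV_2_7: "VV 2 7 = -1"
proof -
  have v2: "VV 2 2 = 1" using VV_p[of 2] by simp
  have d3: "DD 2 3 = -1" unfolding DD_def TT3 by (simp add: m2_2 m2_3)
  have d4: "DD 2 4 = 4" unfolding DD_def TT4 by (simp add: m2_3 m2_4)
  have d5: "DD 2 5 = -3" unfolding DD_def TT5 by (simp add: m2_2 m2_3 m2_4 m2_5)
  have d6: "DD 2 6 = 2" unfolding DD_def TT6 by (simp add: m2_5 m2_6)
  have d7: "DD 2 7 = -4" unfolding DD_def TT7 by (simp add: m2_2 m2_3 m2_4 m2_5 m2_6 m2_7)
  have "VV 2 7 = VV 2 2 + DD 2 3 + DD 2 4 + DD 2 5 + DD 2 6 + DD 2 7"
    by (simp add: numeral_eq_Suc VV_Suc del: One_nat_def)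
  thus ?thesis using v2 d3 d4 d5 d6 d7 by simp
qed

theorem theorem4p10:
  shows "(\<forall>p::nat. prime p \<longrightarrow>
            (\<exists>n. n \<ge> 1 \<and> rat_ord p (farey_bar n) > 0) \<and>
            (\<exists>n. n \<ge> 1 \<and> rat_ord p (farey_bar n) < 0))
       \<and> (\<forall>p::nat. prime p \<longrightarrow> rat_ord p (farey_bar p) = int p - 1 \<and> int p - 1 > 0)
       \<and> rat_ord 2 (farey_bar 7) = -1
       \<and> (\<forall>p::nat. prime p \<and> odd p \<longrightarrow>
            rat_ord p (farey_bar (3 * p - 1)) = - ((int p - 1) div 2))
       \<and> (\<forall>p::nat. prime p \<and> odd p \<longrightarrow>
            (\<forall>n::nat. 8 * p \<le> 3 * n \<and> n \<le> 3 * p - 1 \<longrightarrow> rat_ord p (farey_bar n) < 0))"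
proof -
  have A: "\<forall>p::nat. prime p \<longrightarrow> rat_ord p (farey_bar p) = int p - 1 \<and> int p - 1 > 0"
  proof (intro allI impI)
    fix p :: nat assume p: "prime p"
    show "rat_ord p (farey_bar p) = int p - 1 \<and> int p - 1 > 0"
      using rat_ord_VV[OF p] VV_p[OF p] prime_ge_2_nat[OF p] by simp
  qed
  have B: "rat_ord 2 (farey_bar 7) = -1" using rat_ord_VV[of 2 7] VV_2_7 by simp
  have C: "\<forall>p::nat. prime p \<and> odd p \<longrightarrow>
            rat_ord p (farey_bar (3 * p - 1)) = - ((int p - 1) div 2)"
  proof (intro allI impI)
    fix p :: nat assume po: "prime p \<and> odd p"
    hence p: "prime p" and o: "odd p" by auto
    have p3: "p \<ge> 3" using p_ge3[OF p o] .
    have "VV p (3*p - 1) = 3*int p - 1 - int (3*p-1) - (int (3*p-1) - 2*int p + 1) div 2"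
      using VV_odd[OF p o, of "3*p - 1"] p3 by simp
    also have "\<dots> = - ((int p - 1) div 2)" using p3 o
      by (simp add: of_nat_diff even_iff_mod_2_eq_zero) presburger
    finally show "rat_ord p (farey_bar (3 * p - 1)) = - ((int p - 1) div 2)"
      using rat_ord_VV[OF p] by simp
  qed
  have D: "\<forall>p::nat. prime p \<and> odd p \<longrightarrow>
            (\<forall>n::nat. 8 * p \<le> 3 * n \<and> n \<le> 3 * p - 1 \<longrightarrow> rat_ord p (farey_bar n) < 0)"
  proof (intro allI impI)
    fix p n :: nat assume po: "prime p \<and> odd p" and n: "8 * p \<le> 3 * n \<and> n \<le> 3 * p - 1"
    hence p: "prime p" and o: "odd p" by auto
    have p3: "p \<ge> 3" using p_ge3[OF p o] .
    have n3: "n < 3*p" "\<not> n < 2*p" using n p3 by auto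
    have "VV p n = 3*int p - 1 - int n - (int n - 2*int p + 1) div 2"
      using VV_odd[OF p o n3(1)] n3 by simp
    also have "\<dots> < 0" using n p3 by presburger
    finally show "rat_ord p (farey_bar n) < 0" using rat_ord_VV[OF p] by simp
  qed
  have E: "\<forall>p::nat. prime p \<longrightarrow>
            (\<exists>n. n \<ge> 1 \<and> rat_ord p (farey_bar n) > 0) \<and>
            (\<exists>n. n \<ge> 1 \<and> rat_ord p (farey_bar n) < 0)"
  proof (intro allI impI conjI)
    fix p :: nat assume p: "prime p"
    show "\<exists>n. n \<ge> 1 \<and> rat_ord p (farey_bar n) > 0"
      using A p prime_ge_2_nat[OF p] by (intro exI[of _ p]) auto
    show "\<exists>n. n \<ge> 1 \<and> rat_ord p (farey_bar n) < 0"
    proof (cases "p = 2")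
      case True
      then show ?thesis using B by (intro exI[of _ 7]) simp
    next
      case False
      hence o: "odd p" using p prime_odd_nat prime_ge_2_nat[OF p] by force
      have p3: "p \<ge> 3" using p_ge3[OF p o] .
      have "rat_ord p (farey_bar (3 * p - 1)) < 0" using C p o p3 by simp
      thus ?thesis using p3 by (intro exI[of _ "3*p - 1"]) simp
    qed
  qed
  show ?thesis using A B C D E by blast
qed

end
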